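(* Let $b>0$, $\beta\in(0,1)$, and let $R>0$ be such that, for the functions $\underline u_{\rm out}(r) = Lr^{-m} - br^{-l} \log \frac{r}{R}$, $\underline v_{\rm out}(r) = m(n-2-m)Lr^{-m-2} +\big[- l(n-2-l) \log \frac{r}{R} + (n-2-2l)\big]br^{-l-2}$, $\underline w_{\rm out}(r) = m(m+2)(n-2-m)(n-4-m)Lr^{-m-4} - l(l+2)(n-2-l)(n-4-l)br^{-l-4} \log \frac{r}{R} + (n-2-2l)(l+2)(n-4-l) b r^{-l-4}$, the numbers $\underline r_1 = \sup\{ r>0 : \underline u_{\rm out}(r) \leqslant 0 \}$, $\underline r_2 = \sup\{ r>0 : \underline v_{\rm out}(r) \leqslant 0 \}$, $\underline r_3 = \sup\{ r>0 : \underline w_{\rm out}(r) \leqslant 0 \}$ are well defined and satisfy $R<\underline r_1<\underline r_2<\underline r_3<+\infty$. For $c>0$ and $r>R$ define, writing $\ell(r)=\log\frac{r}{R}$, \[ \begin{aligned} \overline u_{\rm out}(r) &= Lr^{-m} -b r^{-l} \ell + cr^{-l} \ell^{\beta},\\ \overline v_{\rm out}(r) &= m(n-2-m)Lr^{-m-2} - \big[ l(n-2-l) \ell - (n-2-2l)\big] br^{-l-2} \\ &\quad + \big[ l(n-2-l) \ell^{\beta} -\beta(n-2-2l) \ell^{\beta-1} +\beta(1-\beta) \ell^{\beta-2} \big]cr^{-l-2},\\ \overline w_{\rm out}(r) &= m(m+2)(n-2-m)(n-4-m)Lr^{-m-4} - (l+2)(n-4-l) \big[ l(n-2-l) \ell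 -(n-2-2l) \big]br^{-l-4}\\ &\quad +\Big[ l (l+2) (n-2-l) (n-4-l) \ell^{\beta} - \beta(n-2-2l) (l+2)(n-4-l) \ell^{\beta-1} \\ &\qquad +\beta(1-\beta) \big(l(n-2-l)+(l+2)(n-4-l)\big) \ell^{\beta-2} + \beta(1-\beta)(2-\beta) (n-2-2l) \ell^{\beta-3} \\ &\qquad - \beta(1-\beta)(2-\beta)(3-\beta) \ell^{\beta-4} \Big]cr^{-l-4}. \end{aligned} \] Then there exists $c_1>0$ such that for all $c>c_1$, \[ -\Delta \overline u_{\rm out} = \overline v_{\rm out} \ \text{ for all } r>R,\qquad -\Delta \overline v_{\rm out} = \overline w_{\rm out} \ \text{ for all } r>R,\qquad -\Delta \overline w_{\rm out} \geqslant \overline u_{\rm out}^p \ \text{ for all } r>\overline r_1, \] where $\overline r_1 = R \exp\big((c/b)^{\frac{1}{1-\beta}}\big)$.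
   Context: Let $n\geqslant 15$ and $p=p_{\mathsf{JL}}(6,n)$, where $p_{\mathsf{JL}}(6,n)=\frac{(n+4)\sqrt{3} - \sqrt{\sqrt[3]{K_0+K_1}+ \sqrt[3]{K_0-K_1} + 3n^2+32 }}{(n-8)\sqrt{3} - \sqrt{\sqrt[3]{K_0+K_1} + \sqrt[3]{K_0-K_1} + 3n^2+32 }}$ with $2K_0 =-27n^6+324 n^5-756n^4-2592 n^3 + 25776 n^2 +5184 n -23744$, $2K_1 = \sqrt{(2K_0)^2 - 4(192n^2+256)^3}$. Let $m=6/(p-1)$, $L=\big(m(m+2)(m+4)(n-2-m)(n-4-m)(n-6-m)\big)^{1/(p-1)}$, let $\lambda_3$ be the smallest positive root of $P(\lambda)=(m+\lambda)(m+\lambda+2)(m+\lambda+4)(n-2-m-\lambda)(n-4-m-\lambda)(n-6-m-\lambda)-pL^{p-1}$, and set $l=m+\lambda_3$. For a function $f$ of $r=|x|$, $\Delta f$ denotes the Laplacian in $\mathbf R^n$ of $x\mapsto f(|x|)$, i.e. $f''+\frac{n-1}{r}f'$. *)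

theory Defs
  imports "HOL-Analysis.Analysis"
begin

text \<open>The Joseph--Lundgren type exponent p_JL(6,n) (cube roots via root 3, odd root, sign preserving).\<close>
definition pJL6 :: "nat \<Rightarrow> real" where
  "pJL6 n = (let N = real n;
     K0 = (-27*N^6 + 324*N^5 - 756*N^4 - 2592*N^3 + 25776*N^2 + 5184*N - 23744) / 2;
     K1 = sqrt ((2*K0)^2 - 4*(192*N^2 + 256)^3) / 2;
     S = sqrt (root 3 (K0 + K1) + root 3 (K0 - K1) + 3*N^2 + 32)
   in ((N + 4) * sqrt 3 - S) / ((N - 8) * sqrt 3 - S))"

definition mexp :: "nat \<Rightarrow> real" where
  "mexp n = 6 / (pJL6 n - 1)"

definition Lconst :: "nat \<Rightarrow> real" where
  "Lconst n = (let m = mexp n; N = real n in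
     (m*(m+2)*(m+4)*(N-2-m)*(N-4-m)*(N-6-m)) powr (1 / (pJL6 n - 1)))"

definition Ppoly :: "nat \<Rightarrow> real \<Rightarrow> real" where
  "Ppoly n x = (let m = mexp n; N = real n in
     (m+x)*(m+x+2)*(m+x+4)*(N-2-m-x)*(N-4-m-x)*(N-6-m-x)
       - pJL6 n * Lconst n powr (pJL6 n - 1))"

definition lam3 :: "nat \<Rightarrow> real" where
  "lam3 n = Inf {x. 0 < x \<and> Ppoly n x = 0}"

definition lexp :: "nat \<Rightarrow> real" where
  "lexp n = mexp n + lam3 n"

definition rlap :: "nat \<Rightarrow> (real \<Rightarrow> real) \<Rightarrow> real \<Rightarrow> real" where
  "rlap n f r = deriv (deriv f) r + (real n - 1) / r * deriv f r"

definition u_low :: "nat \<Rightarrow> real \<Rightarrow> real \<Rightarrow> real \<Rightarrow> real" where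
  "u_low n b R r = (let m = mexp n; l = lexp n; L = Lconst n in
     L * r powr (-m) - b * r powr (-l) * ln (r / R))"

definition v_low :: "nat \<Rightarrow> real \<Rightarrow> real \<Rightarrow> real \<Rightarrow> real" where
  "v_low n b R r = (let m = mexp n; l = lexp n; L = Lconst n; N = real n in
     m*(N-2-m)*L * r powr (-m-2)
     + (- l*(N-2-l) * ln (r / R) + (N-2-2*l)) * b * r powr (-l-2))"

definition w_low :: "nat \<Rightarrow> real \<Rightarrow> real \<Rightarrow> real \<Rightarrow> real" where
  "w_low n b R r = (let m = mexp n; l = lexp n; L = Lconst n; N = real n in
     m*(m+2)*(N-2-m)*(N-4-m)*L * r powr (-m-4)
     - l*(l+2)*(N-2-l)*(N-4-l)*b * r powr (-l-4) * ln (r / R)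
     + (N-2-2*l)*(l+2)*(N-4-l)*b * r powr (-l-4))"

definition u_up :: "nat \<Rightarrow> real \<Rightarrow> real \<Rightarrow> real \<Rightarrow> real \<Rightarrow> real \<Rightarrow> real" where
  "u_up n b \<beta> R c r = (let m = mexp n; l = lexp n; L = Lconst n; lg = ln (r / R) in
     L * r powr (-m) - b * r powr (-l) * lg + c * r powr (-l) * lg powr \<beta>)"

definition v_up :: "nat \<Rightarrow> real \<Rightarrow> real \<Rightarrow> real \<Rightarrow> real \<Rightarrow> real \<Rightarrow> real" where
  "v_up n b \<beta> R c r = (let m = mexp n; l = lexp n; L = Lconst n; N = real n; lg = ln (r / R) in
     m*(N-2-m)*L * r powr (-m-2)
     - (l*(N-2-l)*lg - (N-2-2*l)) * b * r powr (-l-2)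
     + (l*(N-2-l) * lg powr \<beta> - \<beta>*(N-2-2*l) * lg powr (\<beta>-1)
        + \<beta>*(1-\<beta>) * lg powr (\<beta>-2)) * c * r powr (-l-2))"

definition w_up :: "nat \<Rightarrow> real \<Rightarrow> real \<Rightarrow> real \<Rightarrow> real \<Rightarrow> real \<Rightarrow> real" where
  "w_up n b \<beta> R c r = (let m = mexp n; l = lexp n; L = Lconst n; N = real n; lg = ln (r / R) in
     m*(m+2)*(N-2-m)*(N-4-m)*L * r powr (-m-4)
     - (l+2)*(N-4-l)*(l*(N-2-l)*lg - (N-2-2*l)) * b * r powr (-l-4)
     + (l*(l+2)*(N-2-l)*(N-4-l) * lg powr \<beta>
        - \<beta>*(N-2-2*l)*(l+2)*(N-4-l) * lg powr (\<beta>-1)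
        + \<beta>*(1-\<beta>)*(l*(N-2-l) + (l+2)*(N-4-l)) * lg powr (\<beta>-2)
        + \<beta>*(1-\<beta>)*(2-\<beta>)*(N-2-2*l) * lg powr (\<beta>-3)
        - \<beta>*(1-\<beta>)*(2-\<beta>)*(3-\<beta>) * lg powr (\<beta>-4)) * c * r powr (-l-4))"

end

theory Submission
  imports Defs "HOL-Real_Asymp.Real_Asymp"
begin


lemma rlap_gen:
  fixes K a l R r :: real and \<phi> \<phi>1 \<phi>2 :: "real \<Rightarrow> real"
  assumes d1: "\<And>t. t > 0 \<Longrightarrow> (\<phi> has_real_derivative \<phi>1 t) (at t)"
    and d2: "\<And>t. t > 0 \<Longrightarrow> (\<phi>1 has_real_derivative \<phi>2 t) (at t)"
    and R: "R > 0" and r: "r > R"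
  shows "rlap n (\<lambda>r. K * r powr (-a) + r powr (-l) * \<phi> (ln (r / R))) r =
     K*a*(a+2-real n) * r powr (-a-2) + r powr (-l-2) * (l*(l+2-real n) * \<phi> (ln (r/R))
       + (real n-2-2*l) * \<phi>1 (ln (r/R)) + \<phi>2 (ln (r/R)))"
proof -
  define f where "f = (\<lambda>r. K * r powr (-a) + r powr (-l) * \<phi> (ln (r / R)))"
  define f1 where "f1 = (\<lambda>r. K*(-a) * r powr (-a-1) + r powr (-l-1) * (-l * \<phi> (ln (r/R)) + \<phi>1 (ln (r/R))))"
  define f2 where "f2 = (\<lambda>r. K*a*(a+1) * r powr (-a-2) + r powr (-l-2) * (l*(l+1) * \<phi> (ln (r/R)) - (2*l+1) * \<phi>1 (ln (r/R)) + \<phi>2 (ln (r/R))))"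
  have D1: "(f has_real_derivative f1 x) (at x)" if x: "x > R" for x
  proof -
    have x0: "x > 0" using x R by linarith
    have lnpos: "ln (x/R) > 0" using x R by simp
    have "((\<lambda>r. ln (r / R)) has_real_derivative 1/x) (at x)"
      using x0 R by (auto intro!: derivative_eq_intros)
    from DERIV_chain2[OF d1[OF lnpos] this]
    have c1: "((\<lambda>r. \<phi> (ln (r / R))) has_real_derivative \<phi>1 (ln (x/R)) * (1/x)) (at x)" .
    have p1: "((\<lambda>r. r powr (-a)) has_real_derivative (-a) * x powr (-a-1)) (at x)"
      using has_real_derivative_powr[OF x0, of "-a"] by simp
    have p2: "((\<lambda>r. r powr (-l)) has_real_derivative (-l) * x powr (-l-1)) (at x)"
      using has_real_derivative_powr[OF x0, of "-l"] by simp
    have "(f has_real_derivative K * ((-a) * x powr (-a-1)) + ((-l) * x powr (-l-1) * \<phi> (ln (x/R)) + x powr (-l) * (\<phi>1 (ln (x/R)) * (1/x)))) (at x)"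
      unfolding f_def using DERIV_add[OF DERIV_cmult[OF p1, of K] DERIV_mult[OF p2 c1]] by (simp add: ac_simps)
    moreover have q: "x powr (-l) = x * x powr (-l-1)"
      using powr_add[of x 1 "-l-1"] x0 by simp
    moreover have "K * ((-a) * x powr (-a-1)) + ((-l) * x powr (-l-1) * \<phi> (ln (x/R)) + x powr (-l) * (\<phi>1 (ln (x/R)) * (1/x))) = f1 x"
      unfolding f1_def q using x0 by (simp add: field_simps)
    ultimately show ?thesis by simp
  qed
  have D2: "(f1 has_real_derivative f2 x) (at x)" if x: "x > R" for x
  proof -
    have x0: "x > 0" using x R by linarith
    have lnpos: "ln (x/R) > 0" using x R by simp
    have "((\<lambda>r. ln (r / R)) has_real_derivative 1/x) (at x)"
      using x0 R by (auto intro!: derivative_eq_intros)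
    note L = this
    have c1: "((\<lambda>r. \<phi> (ln (r / R))) has_real_derivative \<phi>1 (ln (x/R)) * (1/x)) (at x)"
      using DERIV_chain2[OF d1[OF lnpos] L] .
    have c2: "((\<lambda>r. \<phi>1 (ln (r / R))) has_real_derivative \<phi>2 (ln (x/R)) * (1/x)) (at x)"
      using DERIV_chain2[OF d2[OF lnpos] L] .
    have p1: "((\<lambda>r. r powr (-a-1)) has_real_derivative (-a-1) * x powr (-a-2)) (at x)"
      using has_real_derivative_powr[OF x0, of "-a-1"] by (simp add: algebra_simps)
    have p2: "((\<lambda>r. r powr (-l-1)) has_real_derivative (-l-1) * x powr (-l-2)) (at x)"
      using has_real_derivative_powr[OF x0, of "-l-1"] by (simp add: algebra_simps)
    have "(f1 has_real_derivative K*(-a) * ((-a-1) * x powr (-a-2)) + ((-l-1) * x powr (-l-2) * (-l * \<phi> (ln (x/R)) + \<phi>1 (ln (x/R))) + x powr (-l-1) * (-l * (\<phi>1 (ln (x/R)) * (1/x)) + \<phi>2 (ln (x/R)) * (1/x)))) (at x)"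
      unfolding f1_def using DERIV_add[OF DERIV_cmult[OF p1, of "K*(-a)"] DERIV_mult[OF p2 DERIV_add[OF DERIV_cmult[OF c1, of "-l"] c2]]] by (simp add: ac_simps)
    moreover have q: "x powr (-l-1) = x * x powr (-l-2)"
    proof -
      have "x powr (-l-1) = x powr (1 + (-l-2))" by (rule arg_cong[of _ _ "\<lambda>e. x powr e"]) simp
      also have "\<dots> = x powr 1 * x powr (-l-2)" by (rule powr_add)
      finally show ?thesis using x0 by simp
    qed
    moreover have "K*(-a) * ((-a-1) * x powr (-a-2)) + ((-l-1) * x powr (-l-2) * (-l * \<phi> (ln (x/R)) + \<phi>1 (ln (x/R))) + x powr (-l-1) * (-l * (\<phi>1 (ln (x/R)) * (1/x)) + \<phi>2 (ln (x/R)) * (1/x))) = f2 x"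
      unfolding f2_def q using x0 by (simp add: field_simps)
    ultimately show ?thesis by simp
  qed
  have "eventually (\<lambda>x. deriv f x = f1 x) (nhds r)"
  proof -
    have "eventually (\<lambda>x. x \<in> {R<..}) (nhds r)" using r by (intro eventually_nhds_in_open) auto
    then show ?thesis by eventually_elim (use D1 DERIV_imp_deriv in auto)
  qed
  then have "deriv (deriv f) r = deriv f1 r" by (rule deriv_cong_ev) simp
  also have "\<dots> = f2 r" using D2[OF r] DERIV_imp_deriv by blast
  finally have e2: "deriv (deriv f) r = f2 r" .
  have e1: "deriv f r = f1 r" using D1[OF r] DERIV_imp_deriv by blast
  have r0: "r > 0" using r R by linarith
  have q1: "r powr (-a-1) = r * r powr (-a-2)" "r powr (-l-1) = r * r powr (-l-2)"
  proof -
    have "r powr (-a-1) = r powr (1 + (-a-2))" "r powr (-l-1) = r powr (1 + (-l-2))" by (rule arg_cong[of _ _ "\<lambda>e. r powr e"], simp)+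
    then show "r powr (-a-1) = r * r powr (-a-2)" "r powr (-l-1) = r * r powr (-l-2)"
      using r0 powr_add[of r 1 "-a-2"] powr_add[of r 1 "-l-2"] by simp_all
  qed
  show ?thesis
    unfolding rlap_def f_def[symmetric] e1 e2 unfolding f1_def f2_def q1
    using r0 by (simp add: field_simps)
qed

lemma rlap_gen2:
  fixes K e g R r :: real and \<phi> \<phi>1 \<phi>2 :: "real \<Rightarrow> real"
  assumes d1: "\<And>t. t > 0 \<Longrightarrow> (\<phi> has_real_derivative \<phi>1 t) (at t)"
    and d2: "\<And>t. t > 0 \<Longrightarrow> (\<phi>1 has_real_derivative \<phi>2 t) (at t)"
    and R: "R > 0" and r: "r > R"
  shows "rlap n (\<lambda>r. K * r powr e + r powr g * \<phi> (ln (r / R))) r =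
     K*e*(e + real n - 2) * r powr (e-2) + r powr (g-2) * (g*(g+real n-2) * \<phi> (ln (r/R))
       + (real n-2+2*g) * \<phi>1 (ln (r/R)) + \<phi>2 (ln (r/R)))"
  using rlap_gen[OF d1 d2 R r, of n K "-e" "-g"] by (simp add: algebra_simps)

lemma powr_deriv_pos: "t > 0 \<Longrightarrow> ((\<lambda>t. t powr e) has_real_derivative e * t powr (e-1)) (at t)"
  by (rule has_real_derivative_powr)

lemma part1:
  assumes R: "R > 0" and r: "r > R"
  shows "- rlap n (u_up n b \<beta> R c) r = v_up n b \<beta> R c r"
proof -
  define m where "m = mexp n"
  define l where "l = lexp n"
  define L where "L = Lconst n"
  have fe: "u_up n b \<beta> R c = (\<lambda>r. L * r powr (-m) + r powr (-l) * (\<lambda>t. c * t powr \<beta> - b * t) (ln (r / R)))"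
    by (rule ext) (simp add: u_up_def Let_def m_def l_def L_def algebra_simps)
  have d1: "((\<lambda>t. c * t powr \<beta> - b * t) has_real_derivative c * (\<beta> * t powr (\<beta>-1)) - b * 1) (at t)" if "t > 0" for t
    by (intro DERIV_diff DERIV_cmult powr_deriv_pos that DERIV_ident)
  have d2: "((\<lambda>t. c * (\<beta> * t powr (\<beta>-1)) - b * 1) has_real_derivative c * (\<beta> * ((\<beta>-1) * t powr (\<beta>-1-1))) - 0) (at t)" if "t > 0" for t
    by (intro DERIV_diff DERIV_cmult powr_deriv_pos that DERIV_const)
  show ?thesis unfolding fe
    apply (subst rlap_gen2[OF d1 d2 R r])
    unfolding v_up_def Let_def m_def[symmetric] l_def[symmetric] L_def[symmetric]
    by (simp add: diff_diff_eq) (simp add: algebra_simps)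
qed

lemma part2:
  assumes R: "R > 0" and r: "r > R" and hl: "real n = 2 * lexp n + 6"
  shows "- rlap n (v_up n b \<beta> R c) r = w_up n b \<beta> R c r"
proof -
  define m where "m = mexp n"
  define l where "l = lexp n"
  define L where "L = Lconst n"
  define N where "N = real n"
  define A where "A = l*(N-2-l)"
  define E where "E = N-2-2*l"
  define K where "K = m*(N-2-m)*L"
  define \<phi> where "\<phi> = (\<lambda>t. b*E - (b*A)*t + (c*A)*t powr \<beta> - (c*\<beta>*E)*t powr (\<beta>-1) + (c*\<beta>*(1-\<beta>))*t powr (\<beta>-2))"
  define \<phi>1 where "\<phi>1 = (\<lambda>t. - (b*A) + (c*A*\<beta>)*t powr (\<beta>-1) - (c*\<beta>*E*(\<beta>-1))*t powr (\<beta>-2) + (c*\<beta>*(1-\<beta>)*(\<beta>-2))*t powr (\<beta>-3))"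
  define \<phi>2 where "\<phi>2 = (\<lambda>t. (c*A*\<beta>*(\<beta>-1))*t powr (\<beta>-2) - (c*\<beta>*E*(\<beta>-1)*(\<beta>-2))*t powr (\<beta>-3) + (c*\<beta>*(1-\<beta>)*(\<beta>-2)*(\<beta>-3))*t powr (\<beta>-4))"
  have fe: "v_up n b \<beta> R c = (\<lambda>r. K * r powr (-m-2) + r powr (-l-2) * \<phi> (ln (r / R)))"
    by (rule ext) (simp add: v_up_def Let_def m_def l_def L_def K_def \<phi>_def A_def E_def N_def algebra_simps)
  have d1: "(\<phi> has_real_derivative \<phi>1 t) (at t)" if "t > 0" for t
    unfolding \<phi>_def \<phi>1_def
    apply (rule DERIV_cong)
     apply (rule DERIV_add DERIV_diff DERIV_cmult powr_deriv_pos DERIV_ident DERIV_const DERIV_minus | rule that)+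
    apply (simp add: diff_diff_eq)
    apply (simp add: algebra_simps)?
    done
  have d2: "(\<phi>1 has_real_derivative \<phi>2 t) (at t)" if "t > 0" for t
    unfolding \<phi>2_def \<phi>1_def
    apply (rule DERIV_cong)
     apply (rule DERIV_add DERIV_diff DERIV_cmult powr_deriv_pos DERIV_ident DERIV_const DERIV_minus | rule that)+
    apply (simp add: diff_diff_eq)
    apply (simp add: algebra_simps)?
    done
  have NN: "N = 2*l+6" using hl by (simp add: N_def l_def)
  show ?thesis unfolding fe
    apply (subst rlap_gen2[OF d1 d2 R r])
    unfolding w_up_def Let_def m_def[symmetric] l_def[symmetric] L_def[symmetric] N_def[symmetric]
    unfolding \<phi>_def \<phi>1_def \<phi>2_def A_def E_def K_def NN
    by (simp add: diff_diff_eq) (simp add: algebra_simps)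
qed




definition Qf :: "real \<Rightarrow> real \<Rightarrow> real" where
  "Qf N x = x*(x+2)*(x+4)*(N-2-x)*(N-4-x)*(N-6-x)"

lemma cond_ident:
  fixes l y :: real
  shows "3456*((l-1- y+6)*Qf (2*l+6) (l-1- y) - (l-1- y) * Qf (2*l+6) l) = (2* y - 2*l + 2) *
    ((12* y^2 - 3*(2*l+6)^2 - 32)^3 - 3*(192*(2*l+6)^2+256)*(12* y^2 - 3*(2*l+6)^2 - 32)
     - (-27*(2*l+6)^6 + 324*(2*l+6)^5 - 756*(2*l+6)^4 - 2592*(2*l+6)^3 + 25776*(2*l+6)^2 + 5184*(2*l+6) - 23744))"
  unfolding Qf_def by algebra

lemma pJL_facts:
  assumes hn: "n \<ge> 15"
  shows "0 < mexp n" "mexp n < (real n - 6)/2 - 1" "pJL6 n = 1 + 6 / mexp n"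
    "pJL6 n * Qf (real n) (mexp n) = Qf (real n) ((real n - 6)/2)"
proof -
  define N where "N = real n"
  have N15: "N \<ge> 15" using hn by (simp add: N_def)
  define k where "k = N - 15"
  have k: "k \<ge> 0" using N15 k_def by simp
  have Nk: "N = k + 15" using k_def by simp
  define P6 where "P6 = -27*N^6 + 324*N^5 - 756*N^4 - 2592*N^3 + 25776*N^2 + 5184*N - 23744"
  define K0 where "K0 = P6 / 2"
  define A where "A = 192*N^2 + 256"
  define D where "D = (2*K0)^2 - 4*A^3"
  define K1 where "K1 = sqrt D / 2"
  have Apos: "A > 0" unfolding A_def by (simp add: add_nonneg_pos)
  have Dpos: "D > 0"
  proof -
    have "D = (10214160759983817 + k*(10585461850409628 + k*(4894534148604354 + k*(1347076448060364 + k*(246965545626615 + k*(31863611628216 + k*(2971699904988 + k*(202081266936 + k*(9951685191 + k*(346289580 + k*(8084610 + k*(113724 + k*729))))))))))))"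
      unfolding D_def K0_def P6_def A_def Nk
      by (simp add: algebra_simps power2_eq_square power3_eq_cube power4_eq_xxxx power_numeral_reduce)
    also have "\<dots> > 0" using k by (intro add_pos_nonneg mult_nonneg_nonneg; simp)+
    finally show ?thesis .
  qed
  have K1sq: "K1^2 = D/4" unfolding K1_def using Dpos by (simp add: power_divide)
  have prodK: "(K0+K1)*(K0-K1) = A^3"
  proof -
    have "(K0+K1)*(K0-K1) = K0^2 - K1^2" by (simp add: algebra_simps power2_eq_square)
    also have "\<dots> = A^3" unfolding K1sq D_def by (simp add: field_simps power2_eq_square)
    finally show ?thesis .
  qed
  define u where "u = root 3 (K0+K1)"
  define v where "v = root 3 (K0-K1)"
  define z where "z = u + v"
  have u3: "u^3 = K0+K1" unfolding u_def by (rule odd_real_root_pow) simp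
  have v3: "v^3 = K0-K1" unfolding v_def by (rule odd_real_root_pow) simp
  have uv: "u * v = A"
  proof -
    have "u * v = root 3 ((K0+K1)*(K0-K1))" unfolding u_def v_def by (simp add: real_root_mult)
    also have "\<dots> = A" unfolding prodK using Apos by (simp add: real_root_power_cancel)
    finally show ?thesis .
  qed
  define F where "F = (\<lambda>w::real. w^3 - 3*A*w - 2*K0)"
  have F_alt: "F w = w^3 - 3*A*w - P6" for w by (simp add: F_def K0_def)
  have Fz: "F z = 0"
  proof -
    have "z^3 = u^3 + v^3 + 3*(u * v)*(u+v)" unfolding z_def by (simp add: algebra_simps power3_eq_cube)
    then show ?thesis unfolding F_def u3 v3 uv z_def[symmetric] by simp
  qed
  define zl where "zl = -3*N^2 - 32"
  define zh where "zh = 160 - 48*N"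
  have Fzl: "F zl < 0"
  proof -
    have "- F zl = 158546808 + k*(58825764 + k*(8645616 + k*(629208 + k*(22680 + k*324))))"
      unfolding F_alt zl_def P6_def A_def Nk
      by (simp add: algebra_simps power2_eq_square power3_eq_cube power4_eq_xxxx power_numeral_reduce)
    also have "\<dots> > 0" using k by (intro add_pos_nonneg mult_nonneg_nonneg; simp)+
    finally show ?thesis by simp
  qed
  have Fzh: "F zh > 0"
  proof -
    have "F zh = 66339 + k*(22959450 + k*(7960869 + k*(1058508 + k*(67581 + k*(2106 + k*27)))))"
      unfolding F_alt zh_def P6_def A_def Nk
      by (simp add: algebra_simps power2_eq_square power3_eq_cube power4_eq_xxxx power_numeral_reduce)
    also have "\<dots> > 0" using k by (intro add_pos_nonneg mult_nonneg_nonneg; simp)+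
    finally show ?thesis .
  qed
  have Fdiff: "F w - F y = (w - y)*((w + y/2)^2 + 3/4*y^2 - 3*A)" for w y
    unfolding F_def by (simp add: algebra_simps power2_eq_square power3_eq_cube)
  have zh2: "zh^2 - 4*A > 0"
  proof -
    have "zh^2 - 4*A = 1536*((N-2)*(N-8))" unfolding zh_def A_def by (simp add: algebra_simps power2_eq_square)
    also have "\<dots> > 0" using N15 by (intro mult_pos_pos) auto
    finally show ?thesis .
  qed
  have zl2: "zl^2 - 4*A > 0"
  proof -
    have "zl^2 - 4*A = 9*(N^2*(N^2-64))" unfolding zl_def A_def by (simp add: algebra_simps power2_eq_square power4_eq_xxxx)
    also have "\<dots> > 0"
    proof -
      have "N*N \<ge> 15*15" using N15 by (intro mult_mono) auto
      thus ?thesis using N15 by (simp add: power2_eq_square)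
    qed
    finally show ?thesis .
  qed
  have zlt: "z < zh"
  proof (rule ccontr)
    assume "\<not> z < zh"
    hence "z - zh \<ge> 0" by simp
    moreover have "(z + zh/2)^2 + 3/4*zh^2 - 3*A > 0" using zh2 zero_le_power2[of "z + zh/2"] by linarith
    ultimately have "F z - F zh \<ge> 0" unfolding Fdiff by simp
    thus False using Fz Fzh by simp
  qed
  have zgt: "z > zl"
  proof (rule ccontr)
    assume "\<not> z > zl"
    hence "z - zl \<le> 0" by simp
    moreover have "(z + zl/2)^2 + 3/4*zl^2 - 3*A > 0" using zl2 zero_le_power2[of "z + zl/2"] by linarith
    ultimately have "F z - F zl \<le> 0" unfolding Fdiff by (simp add: mult_nonpos_nonneg)
    thus False using Fz Fzl by simp
  qed
  define S where "S = sqrt (z + 3*N^2 + 32)"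
  have Sarg: "z + 3*N^2 + 32 > 0" using zgt unfolding zl_def by simp
  have Spos: "S > 0" unfolding S_def using Sarg by simp
  have S2: "S^2 = z + 3*N^2 + 32" unfolding S_def using Sarg by simp
  have S2lt: "S^2 < 3*(N-8)^2" unfolding S2 using zlt unfolding zh_def by (simp add: algebra_simps power2_eq_square)
  have s3: "sqrt 3 > 0" by simp
  have s3sq: "sqrt 3 ^ 2 = 3" by simp
  have Slt: "S < (N-8)* sqrt 3"
  proof -
    have "((N-8)* sqrt 3)^2 = 3*(N-8)^2" by (simp add: power_mult_distrib)
    hence "S^2 < ((N-8)* sqrt 3)^2" using S2lt by simp
    moreover have "(N-8)* sqrt 3 \<ge> 0" using N15 by simp
    ultimately show ?thesis using power2_less_imp_less by blast
  qed
  define \<sigma> where "\<sigma> = S / (2* sqrt 3)"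
  define p where "p = pJL6 n"
  have pdef: "p = ((N + 4) * sqrt 3 - S) / ((N - 8) * sqrt 3 - S)"
    unfolding p_def pJL6_def Let_def N_def[symmetric] P6_def[symmetric] K0_def[symmetric]
      A_def[symmetric] D_def[symmetric] K1_def[symmetric] u_def[symmetric] v_def[symmetric]
    unfolding S_def z_def by (simp add: algebra_simps)
  define m where "m = (N-8)/2 - \<sigma>"
  have den: "(N - 8) * sqrt 3 - S = 2* sqrt 3 * m" unfolding m_def \<sigma>_def by (simp add: right_diff_distrib) (simp add: algebra_simps)
  have mpos: "m > 0" using Slt den by (smt (verit) s3 mult_pos_pos zero_less_mult_iff)
  have s33: "sqrt 3 * (sqrt 3 * x) = 3 * x" for x by (simp add: mult.assoc[symmetric])
  have p1: "p - 1 = 6 / m"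
  proof -
    have dne: "(N - 8) * sqrt 3 - S \<noteq> 0" using den mpos by simp
    have "p - 1 = ((N + 4) * sqrt 3 - S - ((N - 8) * sqrt 3 - S)) / ((N - 8) * sqrt 3 - S)"
      unfolding pdef using dne by (simp add: field_simps)
    also have "\<dots> = (12 * sqrt 3) / (2 * sqrt 3 * m)" unfolding den[symmetric] by (simp add: algebra_simps)
    also have "\<dots> = 6 / m" by simp
    finally show ?thesis .
  qed
  have mexp: "mexp n = m" unfolding mexp_def p_def[symmetric] p1 using mpos by simp
  show "0 < mexp n" using mexp mpos by simp
  have sig0: "\<sigma> > 0" unfolding \<sigma>_def using Spos by simp
  have mlt: "m < (N - 6)/2 - 1" unfolding m_def using sig0 by (simp add: field_simps)
  show "mexp n < (real n - 6)/2 - 1" using mlt mexp N_def by simp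
  show "pJL6 n = 1 + 6 / mexp n" unfolding mexp p_def[symmetric] using p1 by simp
  have sig2: "\<sigma>^2 * 12 = S^2" unfolding \<sigma>_def by (simp add: power_divide power_mult_distrib)
  have zs: "z = 12*\<sigma>^2 - 3*N^2 - 32" using sig2 S2 by simp
  have minp: "F (12*\<sigma>^2 - 3*N^2 - 32) = 0" using Fz zs by simp
  define x0 where "x0 = (N-6)/2"
  have "2*x0 = N - 6" unfolding x0_def by simp
  hence Nx: "N = 2*x0+6" by linarith
  have "(N-8)/2 = x0 - 1" unfolding x0_def by (simp add: diff_divide_distrib)
  hence mx: "m = x0 - 1 - \<sigma>" unfolding m_def by simp
  have cond: "3456*((m+6)*Qf N m - m * Qf N x0) = (2*\<sigma> - 2*x0 + 2) * F (12*\<sigma>^2 - 3*N^2 - 32)"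
    unfolding F_alt P6_def A_def mx by (rule cond_ident[of x0 \<sigma>, folded Nx])
  have e1: "(m+6)*Qf N m = m * Qf N ((N-6)/2)" using cond minp unfolding x0_def by simp
  have mp: "m * p = m + 6" using p1 mpos by (simp add: field_simps)
  have "m * (p * Qf N m) = m * Qf N ((N-6)/2)" using e1 mp by (metis mult.assoc)
  hence "p * Qf N m = Qf N ((N-6)/2)" using mpos by simp
  then show "pJL6 n * Qf (real n) (mexp n) = Qf (real n) ((real n - 6)/2)"
    unfolding mexp N_def[symmetric] p_def[symmetric] .
qed




lemma part3_rlap:
  assumes R: "R > 0" and r: "r > R" and hl: "real n = 2 * lexp n + 6"
  shows "- rlap n (w_up n b \<beta> R c) r =
    Qf (real n) (mexp n) * Lconst n * r powr (-mexp n-6) + r powr (-lexp n-6) *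
      (c * Qf (real n) (lexp n) * ln (r/R) powr \<beta> - b * Qf (real n) (lexp n) * ln (r/R)
      + c * (\<beta>*(1-\<beta>)*((lexp n*(lexp n+4))^2 + (2*(lexp n*(lexp n+4))+16)*(lexp n+2)^2) * ln (r/R) powr (\<beta>-2)
           - \<beta>*(1-\<beta>)*(2-\<beta>)*(3-\<beta>)*(2*(lexp n*(lexp n+4))+16+(lexp n+2)^2) * ln (r/R) powr (\<beta>-4)
           + \<beta>*(1-\<beta>)*(2-\<beta>)*(3-\<beta>)*(4-\<beta>)*(5-\<beta>) * ln (r/R) powr (\<beta>-6)))"
proof -
  define m where "m = mexp n"
  define l where "l = lexp n"
  define L where "L = Lconst n"
  define N where "N = real n"
  define A where "A = l*(N-2-l)"
  define E where "E = N-2-2*l"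
  define B where "B = (l+2)*(N-4-l)"
  define K where "K = m*(m+2)*(N-2-m)*(N-4-m)*L"
  define \<phi> where "\<phi> = (\<lambda>t. b*B*E - (b*B*A)*t + (c*A*B)*t powr \<beta> - (c*\<beta>*E*B)*t powr (\<beta>-1)
      + (c*\<beta>*(1-\<beta>)*(A+B))*t powr (\<beta>-2) + (c*\<beta>*(1-\<beta>)*(2-\<beta>)*E)*t powr (\<beta>-3)
      - (c*\<beta>*(1-\<beta>)*(2-\<beta>)*(3-\<beta>))*t powr (\<beta>-4))"
  define \<phi>1 where "\<phi>1 = (\<lambda>t. - (b*B*A) + (c*A*B*\<beta>)*t powr (\<beta>-1) - (c*\<beta>*E*B*(\<beta>-1))*t powr (\<beta>-2)
      + (c*\<beta>*(1-\<beta>)*(A+B)*(\<beta>-2))*t powr (\<beta>-3) + (c*\<beta>*(1-\<beta>)*(2-\<beta>)*E*(\<beta>-3))*t powr (\<beta>-4)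
      - (c*\<beta>*(1-\<beta>)*(2-\<beta>)*(3-\<beta>)*(\<beta>-4))*t powr (\<beta>-5))"
  define \<phi>2 where "\<phi>2 = (\<lambda>t. (c*A*B*\<beta>*(\<beta>-1))*t powr (\<beta>-2) - (c*\<beta>*E*B*(\<beta>-1)*(\<beta>-2))*t powr (\<beta>-3)
      + (c*\<beta>*(1-\<beta>)*(A+B)*(\<beta>-2)*(\<beta>-3))*t powr (\<beta>-4) + (c*\<beta>*(1-\<beta>)*(2-\<beta>)*E*(\<beta>-3)*(\<beta>-4))*t powr (\<beta>-5)
      - (c*\<beta>*(1-\<beta>)*(2-\<beta>)*(3-\<beta>)*(\<beta>-4)*(\<beta>-5))*t powr (\<beta>-6))"
  have fe: "w_up n b \<beta> R c = (\<lambda>r. K * r powr (-m-4) + r powr (-l-4) * \<phi> (ln (r / R)))"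
    by (rule ext) (simp add: w_up_def Let_def m_def l_def L_def K_def \<phi>_def A_def E_def B_def N_def algebra_simps)
  have d1: "(\<phi> has_real_derivative \<phi>1 t) (at t)" if "t > 0" for t
    unfolding \<phi>_def \<phi>1_def
    apply (rule DERIV_cong)
     apply (rule DERIV_add DERIV_diff DERIV_cmult powr_deriv_pos DERIV_ident DERIV_const DERIV_minus | rule that)+
    apply (simp add: diff_diff_eq)
    apply (simp add: algebra_simps)?
    done
  have d2: "(\<phi>1 has_real_derivative \<phi>2 t) (at t)" if "t > 0" for t
    unfolding \<phi>2_def \<phi>1_def
    apply (rule DERIV_cong)
     apply (rule DERIV_add DERIV_diff DERIV_cmult powr_deriv_pos DERIV_ident DERIV_const DERIV_minus | rule that)+
    apply (simp add: diff_diff_eq)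
    apply (simp add: algebra_simps)?
    done
  have NN: "N = 2*l+6" using hl by (simp add: N_def l_def)
  have e6: "-m-4-2 = -m-6" "-l-4-2 = -l-6" by simp_all
  show ?thesis unfolding fe
    apply (subst rlap_gen2[OF d1 d2 R r])
    unfolding m_def[symmetric] l_def[symmetric] L_def[symmetric] N_def[symmetric] e6
    unfolding \<phi>_def \<phi>1_def \<phi>2_def A_def E_def K_def B_def NN Qf_def
    by (simp add: diff_diff_eq) (simp add: algebra_simps power2_eq_square)
qed




lemma exp_neg_bound: "0 \<le> (y::real) \<Longrightarrow> exp (-y) \<le> 1 - y + y^2/2"
proof -
  assume y: "0 \<le> y"
  define g where "g = (\<lambda>x::real. 1 - x + x^2/2 - exp (-x))"
  have "g 0 \<le> g y"
  proof (rule DERIV_nonneg_imp_nondecreasing[OF y])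
    fix x :: real assume x: "0 \<le> x" "x \<le> y"
    have "(g has_real_derivative (-1 + x - exp (-x) * (-1))) (at x)"
      unfolding g_def by (auto intro!: derivative_eq_intros)
    moreover have "-1 + x - exp (-x) * (-1) \<ge> 0" using exp_ge_add_one_self[of "-x"] by simp
    ultimately show "\<exists>d. (g has_real_derivative d) (at x) \<and> d \<ge> 0" by blast
  qed
  thus ?thesis unfolding g_def by simp
qed

lemma powr_bound:
  fixes x p :: real
  assumes "0 \<le> x" "x < 1" "0 \<le> p"
  shows "(1-x) powr p \<le> 1 - p*x + (p*x)^2/2"
proof -
  have "(1-x) powr p = exp (p * ln (1-x))" using assms by (simp add: powr_def)
  also have "\<dots> \<le> exp (-(p*x))"
  proof -
    have "ln (1-x) \<le> -x" using ln_le_minus_one[of "1-x"] assms by simp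
    hence "p * ln (1-x) \<le> p * (-x)" using assms by (intro mult_left_mono) auto
    thus ?thesis by simp
  qed
  also have "\<dots> \<le> 1 - p*x + (p*x)^2/2" using exp_neg_bound[of "p*x"] assms by simp
  finally show ?thesis .
qed

lemma core_alg:
  fixes L Qm p P X x c b \<tau> \<tau>b G :: real
  assumes "P > 0" and hx: "X*(b*\<tau> - c*\<tau>b) = x*L" and hG: "L*Qm*(p*x)^2/2 \<le> c*X*G"
  shows "L*Qm*P*(1 - p*x + (p*x)^2/2) \<le> Qm*L*P + P*X*(c*(p*Qm)*\<tau>b - b*(p*Qm)*\<tau> + c*G)"
proof -
  have "Qm*L*P + P*X*(c*(p*Qm)*\<tau>b - b*(p*Qm)*\<tau> + c*G) - L*Qm*P*(1 - p*x + (p*x)^2/2)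
      = P*(c*X*G - L*Qm*(p*x)^2/2) - p*Qm*P*(X*(b*\<tau> - c*\<tau>b) - x*L)"
    by (simp add: algebra_simps)
  also have "\<dots> = P*(c*X*G - L*Qm*(p*x)^2/2)" using hx by simp
  also have "\<dots> \<ge> 0" using assms by simp
  finally show ?thesis by simp
qed

lemma Q_lt:
  fixes x0 y :: real
  assumes "0 < y" "y < x0"
  shows "Qf (2*x0+6) y < Qf (2*x0+6) x0"
proof -
  define w where "w = x0 - y"
  have w: "0 < w" "w < x0" using assms w_def by auto
  have e1: "Qf (2*x0+6) y = (x0^2 - w^2)*((x0+2)^2 - w^2)*((x0+4)^2 - w^2)"
    unfolding Qf_def w_def by (simp add: algebra_simps power2_eq_square)
  have e2: "Qf (2*x0+6) x0 = x0^2*(x0+2)^2*(x0+4)^2"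
    unfolding Qf_def by (simp add: algebra_simps power2_eq_square)
  have w2: "w^2 < x0^2" using w by (intro power_strict_mono) auto
  have w2': "w^2 < (x0+2)^2" "w^2 < (x0+4)^2" using w by (intro power_strict_mono; simp)+
  have "w^2 > 0" using w by simp
  then have "(x0^2 - w^2)*((x0+2)^2 - w^2)*((x0+4)^2 - w^2) < x0^2*(x0+2)^2*(x0+4)^2"
    using w2 w2' by (intro mult_strict_mono mult_pos_pos) auto
  then show ?thesis unfolding e1 e2 .
qed

lemma tau_thresh:
  fixes \<delta> \<epsilon> :: real
  assumes "\<delta> > 0" "\<epsilon> > 0"
  shows "\<exists>T\<ge>1. \<forall>t\<ge>T. t^4 * exp (-\<delta>*t) \<le> \<epsilon>"
proof -
  have "((\<lambda>t. t^4 * exp (-\<delta>*t)) \<longlongrightarrow> 0) at_top" using assms(1) by real_asymp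
  hence "eventually (\<lambda>t. dist (t^4 * exp (-\<delta>*t)) 0 < \<epsilon>) at_top"
    using assms(2) tendstoD by blast
  then obtain T where T: "\<And>t. t \<ge> T \<Longrightarrow> dist (t^4 * exp (-\<delta>*t)) 0 < \<epsilon>"
    unfolding eventually_at_top_linorder by blast
  show ?thesis
  proof (intro exI[of _ "max T 1"] conjI allI impI)
    fix t assume "max T 1 \<le> t"
    hence "dist (t^4 * exp (-\<delta>*t)) 0 < \<epsilon>" using T by simp
    thus "t^4 * exp (-\<delta>*t) \<le> \<epsilon>" by (simp add: dist_real_def)
  qed simp
qed




lemma basic_facts:
  assumes hn: "n \<ge> 15"
  shows "lexp n = (real n - 6)/2" "0 < mexp n" "mexp n < lexp n - 1"
    "pJL6 n = 1 + 6 / mexp n" "Qf (real n) (mexp n) > 0"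
    "Lconst n > 0" "Lconst n powr (pJL6 n - 1) = Qf (real n) (mexp n)"
    "pJL6 n * Qf (real n) (mexp n) = Qf (real n) (lexp n)"
proof -
  define N where "N = real n"
  define m where "m = mexp n"
  define p where "p = pJL6 n"
  define x0 where "x0 = (N-6)/2"
  have m0: "0 < m" and mx: "m < x0 - 1" and pm: "p = 1 + 6/m" and pQ: "p * Qf N m = Qf N x0"
    using pJL_facts[OF hn] unfolding N_def[symmetric] m_def[symmetric] p_def[symmetric] x0_def by auto
  have "2*x0 = N - 6" unfolding x0_def by simp
  hence Nx: "N = 2*x0+6" by linarith
  have Qm: "Qf N m > 0" unfolding Qf_def Nx using m0 mx by (intro mult_pos_pos) auto
  show "Qf (real n) (mexp n) > 0" using Qm unfolding N_def m_def .
  have p1: "p - 1 > 0" using pm m0 by simp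
  have Ldef: "Lconst n = Qf N m powr (1 / (p - 1))"
    unfolding Lconst_def Let_def Qf_def N_def m_def p_def ..
  show "Lconst n > 0" using Ldef Qm by simp
  have "Lconst n powr (p - 1) = Qf N m"
    unfolding Ldef powr_powr using p1 Qm by simp
  thus "Lconst n powr (pJL6 n - 1) = Qf (real n) (mexp n)" unfolding p_def N_def m_def .
  have Pp: "Ppoly n x = Qf N (m + x) - Qf N x0" for x
  proof -
    have "Ppoly n x = Qf N (m+x) - p * Lconst n powr (p - 1)"
      unfolding Ppoly_def Let_def Qf_def N_def[symmetric] m_def[symmetric] p_def[symmetric]
      by (simp add: algebra_simps)
    also have "Lconst n powr (p - 1) = Qf N m" unfolding Ldef powr_powr using p1 Qm by simp
    finally show ?thesis using pQ by simp
  qed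
  have lam: "lam3 n = x0 - m"
    unfolding lam3_def
  proof (rule cInf_eq_minimum)
    show "x0 - m \<in> {x. 0 < x \<and> Ppoly n x = 0}" using mx Pp by simp
    fix x assume "x \<in> {x. 0 < x \<and> Ppoly n x = 0}"
    hence x: "0 < x" "Ppoly n x = 0" by auto
    show "x0 - m \<le> x"
    proof (rule ccontr)
      assume "\<not> x0 - m \<le> x"
      hence "m + x < x0" by simp
      hence "Qf N (m+x) < Qf N x0" unfolding Nx using Q_lt[of "m+x" x0] m0 x by simp
      thus False using x Pp[of x] by simp
    qed
  qed
  have lx: "lexp n = x0" unfolding lexp_def lam m_def[symmetric] by simp
  show "lexp n = (real n - 6)/2" using lx x0_def N_def by simp
  show "0 < mexp n" using m0 m_def by simp
  show "mexp n < lexp n - 1" using mx lx m_def by simp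
  show "pJL6 n = 1 + 6 / mexp n" using pm p_def m_def by simp
  show "pJL6 n * Qf (real n) (mexp n) = Qf (real n) (lexp n)" using pQ lx p_def m_def N_def by simp
qed




theorem lemma4p4:
  fixes n :: nat and b \<beta> R :: real
  assumes hn: "n \<ge> 15"
    and hb: "b > 0" and h\<beta>: "0 < \<beta>" "\<beta> < 1" and hR: "R > 0"
    and hS1: "{r. 0 < r \<and> u_low n b R r \<le> 0} \<noteq> {}" "bdd_above {r. 0 < r \<and> u_low n b R r \<le> 0}"
    and hS2: "{r. 0 < r \<and> v_low n b R r \<le> 0} \<noteq> {}" "bdd_above {r. 0 < r \<and> v_low n b R r \<le> 0}"
    and hS3: "{r. 0 < r \<and> w_low n b R r \<le> 0} \<noteq> {}" "bdd_above {r. 0 < r \<and> w_low n b R r \<le> 0}"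
    and hord: "R < Sup {r. 0 < r \<and> u_low n b R r \<le> 0}"
      "Sup {r. 0 < r \<and> u_low n b R r \<le> 0} < Sup {r. 0 < r \<and> v_low n b R r \<le> 0}"
      "Sup {r. 0 < r \<and> v_low n b R r \<le> 0} < Sup {r. 0 < r \<and> w_low n b R r \<le> 0}"
  shows "\<exists>c1>0. \<forall>c>c1.
     (\<forall>r>R. - rlap n (u_up n b \<beta> R c) r = v_up n b \<beta> R c r) \<and>
     (\<forall>r>R. - rlap n (v_up n b \<beta> R c) r = w_up n b \<beta> R c r) \<and>
     (\<forall>r > R * exp ((c / b) powr (1 / (1 - \<beta>))).
        - rlap n (w_up n b \<beta> R c) r \<ge> (u_up n b \<beta> R c r) powr (pJL6 n))"
proof -
  note BF = basic_facts[OF hn]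
  have hl: "real n = 2 * lexp n + 6" using BF(1) by simp
  define m where "m = mexp n"
  define l where "l = lexp n"
  define L where "L = Lconst n"
  define p where "p = pJL6 n"
  define Qm where "Qm = Qf (real n) m"
  define Ql where "Ql = Qf (real n) l"
  have m0: "0 < m" and ml: "m < l - 1" and pm: "p = 1 + 6/m" and Qm0: "Qm > 0" and L0: "L > 0"
    and LQ: "L powr (p - 1) = Qm" and pQ: "p * Qm = Ql"
    using BF unfolding m_def[symmetric] l_def[symmetric] L_def[symmetric] p_def[symmetric]
      Qm_def[symmetric] Ql_def[symmetric] by auto
  have p1: "p > 1" using pm m0 by simp
  have mp: "m * p = m + 6" using pm m0 by (simp add: field_simps)
  have Lp: "L powr p = L * Qm"
  proof -
    have "L powr p = L powr (1 + (p - 1))" by simp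
    also have "\<dots> = L * Qm" unfolding powr_add LQ using L0 by simp
    finally show ?thesis .
  qed
  define \<delta> where "\<delta> = l - m"
  have \<delta>0: "\<delta> > 0" using ml \<delta>_def by simp
  define A' where "A' = l*(l+4)"
  define B' where "B' = (l+2)^2"
  have l1: "l > 1" using ml m0 by simp
  have A'0: "A' > 0" unfolding A'_def using l1 by simp
  have B'0: "B' > 0" unfolding B'_def using l1 by simp
  define k2 where "k2 = \<beta>*(1-\<beta>)*(A'^2 + (2*A'+16)*B')"
  define k4 where "k4 = \<beta>*(1-\<beta>)*(2-\<beta>)*(3-\<beta>)*(2*A'+16+B')"
  define k6 where "k6 = \<beta>*(1-\<beta>)*(2-\<beta>)*(3-\<beta>)*(4-\<beta>)*(5-\<beta>)"
  have k2: "k2 > 0" unfolding k2_def using h\<beta> A'0 B'0 by (intro mult_pos_pos add_pos_pos) auto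
  have k4: "k4 \<ge> 0" unfolding k4_def using h\<beta> A'0 B'0 by (intro mult_nonneg_nonneg add_nonneg_nonneg) auto
  have k6: "k6 \<ge> 0" unfolding k6_def using h\<beta> by (intro mult_nonneg_nonneg) auto
  define Rd where "Rd = R powr (-\<delta>)"
  have Rd0: "Rd > 0" unfolding Rd_def using hR by simp
  define \<epsilon> where "\<epsilon> = min (L*k2/(Qm*p^2*b^2*Rd)) (L/(2*b*Rd))"
  have \<epsilon>0: "\<epsilon> > 0" unfolding \<epsilon>_def using L0 k2 Qm0 p1 hb Rd0 by simp
  obtain T1 where T1: "T1 \<ge> 1" "\<And>t. t \<ge> T1 \<Longrightarrow> t^4 * exp (-\<delta>*t) \<le> \<epsilon>"
    using tau_thresh[OF \<delta>0 \<epsilon>0] by blast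
  define T where "T = max T1 (sqrt (2*k4/k2))"
  have T1': "T \<ge> 1" unfolding T_def using T1 by simp
  define c1 where "c1 = max 1 (b * T powr (1-\<beta>))"
  show ?thesis
  proof (intro exI[of _ c1] conjI allI impI)
    show "c1 > 0" unfolding c1_def by simp
    fix c assume c: "c > c1"
    show "- rlap n (u_up n b \<beta> R c) r = v_up n b \<beta> R c r" if "r > R" for r
      using part1[OF hR that] .
    show "- rlap n (v_up n b \<beta> R c) r = w_up n b \<beta> R c r" if "r > R" for r
      using part2[OF hR that hl] .
    fix r assume r: "r > R * exp ((c / b) powr (1 / (1 - \<beta>)))"
    define T0 where "T0 = (c / b) powr (1 / (1 - \<beta>))"
    have c1': "c \<ge> 1" "c > b * T powr (1-\<beta>)" using c unfolding c1_def by auto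
    have T0pos: "T0 \<ge> 0" unfolding T0_def by simp
    have "exp T0 \<ge> 1" using T0pos by simp
    hence "R * exp T0 \<ge> R" using hR by simp
    hence rR: "r > R" using r unfolding T0_def[symmetric] by linarith
    have r0: "r > 0" using rR hR by simp
    define \<tau> where "\<tau> = ln (r / R)"
    have \<tau>T0: "\<tau> > T0"
    proof -
      have "r / R > exp T0" using r hR unfolding T0_def[symmetric] by (simp add: field_simps)
      hence "ln (r/R) > ln (exp T0)" using hR r0 by (intro ln_less_cancel_iff[THEN iffD2]) auto
      thus ?thesis unfolding \<tau>_def by simp
    qed
    have T0T: "T0 > T"
    proof -
      have "c / b > T powr (1-\<beta>)" using c1' hb by (simp add: field_simps)
      hence "(T powr (1-\<beta>)) powr (1/(1-\<beta>)) < (c/b) powr (1/(1-\<beta>))"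
        using h\<beta> by (intro powr_less_mono2) auto
      moreover have "(T powr (1-\<beta>)) powr (1/(1-\<beta>)) = T" using T1' h\<beta> by (simp add: powr_powr)
      ultimately show ?thesis unfolding T0_def by simp
    qed
    have \<tau>T: "\<tau> > T" using \<tau>T0 T0T by simp
    have \<tau>1: "\<tau> \<ge> 1" using \<tau>T T1' by simp
    have \<tau>0: "\<tau> > 0" using \<tau>1 by simp
    have \<tau>eps: "\<tau>^4 * exp (-\<delta>*\<tau>) \<le> \<epsilon>" using T1(2)[of \<tau>] \<tau>T unfolding T_def by simp
    have \<tau>sq: "\<tau>^2 \<ge> 2*k4/k2"
    proof -
      have "\<tau> \<ge> sqrt (2*k4/k2)" using \<tau>T unfolding T_def by simp
      hence "\<tau>^2 \<ge> (sqrt (2*k4/k2))^2" using \<tau>0 k2 k4 by (intro power_mono) auto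
      thus ?thesis using k2 k4 by simp
    qed
    define \<tau>b where "\<tau>b = \<tau> powr \<beta>"
    have \<tau>b0: "\<tau>b > 0" unfolding \<tau>b_def using \<tau>0 by simp
    have bc: "b*\<tau> > c*\<tau>b"
    proof -
      have "\<tau> powr (1-\<beta>) > T0 powr (1-\<beta>)" using \<tau>T0 T0pos h\<beta> by (intro powr_less_mono2) auto
      moreover have "T0 powr (1-\<beta>) = c/b" unfolding T0_def using h\<beta> c1' hb by (simp add: powr_powr)
      ultimately have "\<tau> powr (1-\<beta>) > c/b" by simp
      hence "b * \<tau> powr (1-\<beta>) > c" using hb by (simp add: field_simps)
      hence "b * \<tau> powr (1-\<beta>) * \<tau>b > c * \<tau>b" using \<tau>b0 by simp
      moreover have "\<tau> powr (1-\<beta>) * \<tau>b = \<tau>" unfolding \<tau>b_def using \<tau>0 by (simp flip: powr_add)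
      ultimately show ?thesis by (simp add: mult.assoc)
    qed
    define P where "P = r powr (-m-6)"
    define X where "X = r powr (m - l)"
    have P0: "P > 0" unfolding P_def using r0 by simp
    have X0: "X > 0" unfolding X_def using r0 by simp
    have rl6: "r powr (-l-6) = P * X"
    proof -
      have "r powr (-l-6) = r powr ((-m-6) + (m-l))" by (rule arg_cong[of _ _ "\<lambda>e. r powr e"]) simp
      thus ?thesis unfolding P_def X_def powr_add .
    qed
    have rl: "r powr (-l) = r powr (-m) * X"
    proof -
      have "r powr (-l) = r powr ((-m) + (m-l))" by (rule arg_cong[of _ _ "\<lambda>e. r powr e"]) simp
      thus ?thesis unfolding X_def powr_add .
    qed
    have Xe: "X = Rd * exp (-\<delta>*\<tau>)"
    proof -
      have "r = R * exp \<tau>" unfolding \<tau>_def using hR r0 by simp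
      hence "X = (R * exp \<tau>) powr (m - l)" unfolding X_def by simp
      also have "\<dots> = R powr (m-l) * exp \<tau> powr (m-l)" using hR by (simp add: powr_mult)
      also have "exp \<tau> powr (m-l) = exp (-\<delta>*\<tau>)" unfolding powr_def \<delta>_def by (simp add: algebra_simps)
      finally show ?thesis unfolding Rd_def \<delta>_def by simp
    qed
    define x where "x = X*(b*\<tau> - c*\<tau>b)/L"
    have hx: "X*(b*\<tau> - c*\<tau>b) = x*L" unfolding x_def using L0 by simp
    have x0: "x \<ge> 0" unfolding x_def using X0 bc L0 by simp
    have xle: "x \<le> b*\<tau>*X/L" unfolding x_def using X0 \<tau>b0 L0 c1' by (simp add: divide_right_mono algebra_simps)
    have \<tau>4: "\<tau> \<le> \<tau>^4" using \<tau>1 by (simp add: power_increasing[of 1 4 \<tau>, simplified])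
    have bX: "b*\<tau>*X \<le> b*Rd*(\<tau>^4 * exp (-\<delta>*\<tau>))"
    proof -
      have "b*\<tau>*X = b*Rd*(\<tau> * exp (-\<delta>*\<tau>))" unfolding Xe by simp
      also have "\<dots> \<le> b*Rd*(\<tau>^4 * exp (-\<delta>*\<tau>))" using \<tau>4 hb Rd0 by (intro mult_left_mono) auto
      finally show ?thesis .
    qed
    have x1: "x < 1"
    proof -
      have "b*Rd*(\<tau>^4 * exp (-\<delta>*\<tau>)) \<le> b*Rd*\<epsilon>" using \<tau>eps hb Rd0 by (intro mult_left_mono) auto
      hence "b*\<tau>*X \<le> b*Rd*\<epsilon>" using bX by linarith
      also have "\<dots> \<le> b*Rd*(L/(2*b*Rd))" unfolding \<epsilon>_def using hb Rd0 by (intro mult_left_mono) auto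
      also have "\<dots> = L/2" using hb Rd0 by simp
      finally have "b*\<tau>*X/L \<le> 1/2" using L0 by simp
      thus ?thesis using xle by linarith
    qed
    define G where "G = k2 * \<tau> powr (\<beta>-2) - k4 * \<tau> powr (\<beta>-4) + k6 * \<tau> powr (\<beta>-6)"
    have G: "G \<ge> k2 * \<tau> powr (\<beta>-2) / 2"
    proof -
      have e: "\<tau> powr (\<beta>-4) = \<tau> powr (\<beta>-2) / \<tau>^2"
      proof -
        have "\<tau> powr (\<beta>-4) = \<tau> powr ((\<beta>-2) - 2)" by (rule arg_cong[of _ _ "\<lambda>e. \<tau> powr e"]) simp
        also have "\<dots> = \<tau> powr (\<beta>-2) / \<tau> powr 2" by (rule powr_diff)
        also have "\<tau> powr 2 = \<tau>^2" using \<tau>0 by simp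
        finally show ?thesis .
      qed
      have "k4 * \<tau> powr (\<beta>-4) = (k4 / \<tau>^2) * \<tau> powr (\<beta>-2)" unfolding e by simp
      also have "\<dots> \<le> (k2/2) * \<tau> powr (\<beta>-2)"
        using \<tau>sq k2 \<tau>0 by (intro mult_right_mono) (auto simp: field_simps)
      finally have "k4 * \<tau> powr (\<beta>-4) \<le> (k2/2) * \<tau> powr (\<beta>-2)" .
      moreover have "k6 * \<tau> powr (\<beta>-6) \<ge> 0" using k6 by simp
      ultimately show ?thesis unfolding G_def by simp
    qed
    have hG: "L*Qm*(p*x)^2/2 \<le> c*X*G"
    proof -
      have tb: "\<tau> powr (\<beta>-2) \<ge> 1 / \<tau>^2"
      proof -
        have "\<tau> powr (\<beta>-2) = \<tau> powr \<beta> / \<tau> powr 2" by (rule powr_diff)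
        also have "\<tau> powr 2 = \<tau>^2" using \<tau>0 by simp
        finally have e: "\<tau> powr (\<beta>-2) = \<tau>b / \<tau>^2" unfolding \<tau>b_def .
        have "\<tau>b \<ge> 1" unfolding \<tau>b_def using \<tau>1 h\<beta> by (simp add: ge_one_powr_ge_zero)
        thus ?thesis unfolding e using \<tau>0 by (simp add: divide_right_mono)
      qed
      have G2: "G \<ge> k2 / (2*\<tau>^2)"
      proof -
        have "k2 * (1/\<tau>^2) \<le> k2 * \<tau> powr (\<beta>-2)" using tb k2 by (intro mult_left_mono) auto
        thus ?thesis using G by simp
      qed
      have h4: "\<tau>^4 * X \<le> L*k2/(Qm*p^2*b^2)"
      proof -
        have "\<tau>^4 * X = Rd * (\<tau>^4 * exp (-\<delta>*\<tau>))" unfolding Xe by simp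
        also have "\<dots> \<le> Rd * \<epsilon>" using \<tau>eps Rd0 by (intro mult_left_mono) auto
        also have "\<dots> \<le> Rd * (L*k2/(Qm*p^2*b^2*Rd))" unfolding \<epsilon>_def using Rd0 by (intro mult_left_mono) auto
        also have "\<dots> = L*k2/(Qm*p^2*b^2)" using Rd0 by simp
        finally show ?thesis .
      qed
      have Cpos: "Qm*p^2*b^2 > 0" using Qm0 p1 hb by simp
      have gen: "C * (y / C) = y" if "C \<noteq> 0" for C y :: real using that by simp
      have cc: "(Qm*p^2*b^2) * (L*k2/(Qm*p^2*b^2)) = L*k2" using Cpos by (intro gen) linarith
      have h4': "(Qm*p^2*b^2) * (\<tau>^4 * X) \<le> L*k2"
        using mult_left_mono[OF h4, of "Qm*p^2*b^2"] Cpos unfolding cc by simp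
      have px: "p*x \<le> p*(b*\<tau>*X/L)" using xle p1 by (intro mult_left_mono) auto
      have px2: "(p*x)^2 \<le> (p*(b*\<tau>*X/L))^2" using px x0 p1 by (intro power_mono) auto
      have "L*Qm*(p*x)^2/2 \<le> L*Qm*(p*(b*\<tau>*X/L))^2/2"
        using px2 L0 Qm0 by (intro divide_right_mono mult_left_mono) auto
      also have "\<dots> = ((Qm*p^2*b^2) * (\<tau>^4 * X)) * X / (2*L*\<tau>^2)"
        using L0 \<tau>0 by (simp add: field_simps power2_eq_square power4_eq_xxxx)
      also have "\<dots> \<le> (L*k2) * X / (2*L*\<tau>^2)"
        using h4' X0 L0 \<tau>0 by (intro divide_right_mono mult_right_mono) auto
      also have "\<dots> = X * (k2 / (2*\<tau>^2))" using L0 \<tau>0 by (simp add: field_simps)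
      also have "\<dots> \<le> X * G" using G2 X0 by (intro mult_left_mono) auto
      also have "\<dots> \<le> c * X * G"
      proof -
        have "G \<ge> 0" using G2 k2 \<tau>0 by (smt (verit) divide_pos_pos zero_less_power mult_pos_pos)
        hence "X*G \<ge> 0" using X0 by simp
        thus ?thesis using c1' by (simp add: mult.assoc mult_le_cancel_right1)
      qed
      finally show ?thesis .
    qed
    have W: "- rlap n (w_up n b \<beta> R c) r = Qm*L*P + P*X*(c*(p*Qm)*\<tau>b - b*(p*Qm)*\<tau> + c*G)"
      unfolding part3_rlap[OF hR rR hl] pQ
      unfolding m_def[symmetric] l_def[symmetric] L_def[symmetric] Qm_def[symmetric] Ql_def[symmetric]
        \<tau>_def[symmetric] \<tau>b_def[symmetric] P_def[symmetric] rl6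
      unfolding A'_def[symmetric] B'_def[symmetric]
      unfolding k2_def[symmetric] k4_def[symmetric] k6_def[symmetric] G_def
      by (simp add: algebra_simps)
    have U: "u_up n b \<beta> R c r = (L * r powr (-m)) * (1 - x)"
    proof -
      have "u_up n b \<beta> R c r = L * r powr (-m) - b * r powr (-l) * \<tau> + c * r powr (-l) * \<tau>b"
        unfolding u_up_def Let_def m_def[symmetric] l_def[symmetric] L_def[symmetric] \<tau>_def[symmetric]
          \<tau>b_def[symmetric] ..
      also have "\<dots> = L * r powr (-m) - r powr (-m) * (X * (b*\<tau> - c*\<tau>b))"
        unfolding rl by (simp add: algebra_simps)
      also have "\<dots> = (L * r powr (-m)) * (1 - x)" unfolding hx by (simp add: algebra_simps)
      finally show ?thesis .
    qed
    have "u_up n b \<beta> R c r powr p = (L * r powr (-m)) powr p * (1 - x) powr p"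
      unfolding U using L0 x1 by (simp add: powr_mult)
    also have "(L * r powr (-m)) powr p = L * Qm * P"
    proof -
      have "(L * r powr (-m)) powr p = L powr p * r powr (-m * p)" using L0 r0 by (simp add: powr_mult powr_powr)
      also have "-m * p = -m-6" using mp by simp
      finally show ?thesis unfolding Lp P_def .
    qed
    also have "L * Qm * P * (1 - x) powr p \<le> L*Qm*P*(1 - p*x + (p*x)^2/2)"
      using powr_bound[OF x0 x1, of p] p1 L0 Qm0 P0 by (intro mult_left_mono) auto
    also have "\<dots> \<le> - rlap n (w_up n b \<beta> R c) r" unfolding W by (rule core_alg[OF P0 hx hG])
    finally show "- rlap n (w_up n b \<beta> R c) r \<ge> (u_up n b \<beta> R c r) powr (pJL6 n)"
      unfolding p_def .
  qed
qed


end
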